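(* Let $z\in\mathbb{C}$, $x=e^{2\pi iz}$, and let $\omega_0,\dots,\omega_r\in\mathbb{C}$ with $\omega_0,\dots,\omega_r,\omega_0+\omega_1\in\mathbb{C}\setminus\mathbb{R}$, $q_j=e^{2\pi i\omega_j}$. Then $$\frac{(x|q_0,q_1,q_2,\dots,q_r)_\infty}{(x|q_0,q_0q_1,q_2,\dots,q_r)_\infty}=(x|q_1^{-1},q_0q_1,q_2,\dots,q_r)_\infty^{-1}.$$
   Context: q-shifted factorial: for $q_j=e^{2\pi i\omega_j}$ with $\omega_j\in\mathbb{C}\setminus\mathbb{R}$: if all $|q_j|<1$, $(x|q_0,\dots,q_r)_\infty=\prod_{j_0,\dots,j_r\ge0}(1-xq_0^{j_0}\cdots q_r^{j_r})$; in general (the expression is symmetric in the $q_j$), if $|q_0|,\dots,|q_{k-1}|>1$ and $|q_k|,\dots,|q_r|<1$, $(x|\underline q)_\infty=\big((q_0\cdots q_{k-1})^{-1}x\,|\,q_0^{-1},\dots,q_{k-1}^{-1},q_k,\dots,q_r\big)_\infty^{(-1)^k}$, the latter product being absolutely convergent. *)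

theory Defs
  imports "HOL-Analysis.Analysis"
begin

definition multi_idx :: "nat \<Rightarrow> nat \<Rightarrow> nat list set" where
  "multi_idx n N = {js. length js = n \<and> set js \<subseteq> {..<N}}"

definition qpoch_box :: "complex \<Rightarrow> complex list \<Rightarrow> nat \<Rightarrow> complex" where
  "qpoch_box x qs N =
     (\<Prod>js\<in>multi_idx (length qs) N. 1 - x * prod_list (map2 (\<lambda>q j. q ^ j) qs js))"

text \<open>The (absolutely convergent, when all |q_j| < 1) infinite product
  prod_{j_0,...,j_r >= 0} (1 - x q_0^j_0 ... q_r^j_r), as the limit of box partial products.\<close>
definition qpoch_conv :: "complex \<Rightarrow> complex list \<Rightarrow> complex" where
  "qpoch_conv x qs = lim (qpoch_box x qs)"

definition qpoch :: "complex \<Rightarrow> complex list \<Rightarrow> complex" where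
  "qpoch x qs =
     (let big = filter (\<lambda>q. norm q > 1) qs;
          qs' = map (\<lambda>q. if norm q > 1 then inverse q else q) qs;
          x' = inverse (prod_list big) * x
      in if even (length big) then qpoch_conv x' qs' else inverse (qpoch_conv x' qs'))"

end

theory Submission
  imports Defs
begin




lemma norm_prod_minus1_le_gen:
  fixes f :: "'b \<Rightarrow> complex"
  shows "norm (prod (\<lambda>n. 1 + f n) A - 1) \<le> prod (\<lambda>n. 1 + norm (f n)) A - 1"
proof (induction A rule: infinite_finite_induct)
  case (insert x A)
  from insert.hyps have 
    "norm ((\<Prod>n\<in>insert x A. 1 + f n) - 1) = 
       norm ((\<Prod>n\<in>A. 1 + f n) - 1 + f x * (\<Prod>n\<in>A. 1 + f n))"
    by (simp add: algebra_simps)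
  also have "\<dots> \<le> norm ((\<Prod>n\<in>A. 1 + f n) - 1) + norm (f x * (\<Prod>n\<in>A. 1 + f n))"
    by (rule norm_triangle_ineq)
  also have "norm (f x * (\<Prod>n\<in>A. 1 + f n)) = norm (f x) * (\<Prod>x\<in>A. norm (1 + f x))"
    by (simp add: prod_norm norm_mult)
  also have "(\<Prod>x\<in>A. norm (1 + f x)) \<le> (\<Prod>x\<in>A. norm (1::complex) + norm (f x))"
    by (intro prod_mono norm_triangle_ineq ballI conjI) auto
  also have "norm (1::complex) = 1" by simp
  also note insert.IH
  also have "(\<Prod>n\<in>A. 1 + norm (f n)) - 1 + norm (f x) * (\<Prod>x\<in>A. 1 + norm (f x)) =
             (\<Prod>n\<in>insert x A. 1 + norm (f n)) - 1"
    using insert.hyps by (simp add: algebra_simps)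
  finally show ?case by - (simp_all add: mult_left_mono)
qed simp_all

lemma norm_le_1_plus: "norm (z::complex) \<le> 1 + norm (z - 1)"
  using norm_triangle_ineq[of 1 "z-1"] by simp

lemma prod_norm_exp_bound:
  fixes f :: "'b \<Rightarrow> complex"
  shows "norm (prod f F) \<le> exp (sum (\<lambda>j. norm (f j - 1)) F)"
proof -
  have "norm (prod f F) = prod (\<lambda>j. norm (1 + (f j - 1))) F"
    by (simp add: prod_norm)
  also have "\<dots> \<le> prod (\<lambda>j. 1 + norm (f j - 1)) F"
    by (intro prod_mono conjI norm_ge_zero) (simp add: norm_le_1_plus)
  also have "\<dots> \<le> exp (sum (\<lambda>j. norm (f j - 1)) F)"
    by (rule prod_le_exp_sum) auto
  finally show ?thesis .
qed

lemma prod_diff_bound: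
  fixes f :: "'b \<Rightarrow> complex"
  assumes "finite F" "F' \<subseteq> F"
  shows "norm (prod f F - prod f F') \<le>
     exp (sum (\<lambda>j. norm (f j - 1)) F') * (exp (sum (\<lambda>j. norm (f j - 1)) (F - F')) - 1)"
proof -
  have fF': "finite F'" using assms finite_subset by blast
  have "prod f F = prod f F' * prod f (F - F')"
    using assms by (metis prod.subset_diff mult.commute)
  hence "prod f F - prod f F' = prod f F' * (prod (\<lambda>j. 1 + (f j - 1)) (F - F') - 1)"
    by (simp add: algebra_simps)
  hence "norm (prod f F - prod f F') = norm (prod f F') * norm (prod (\<lambda>j. 1 + (f j - 1)) (F - F') - 1)"
    by (simp add: norm_mult)
  also have "\<dots> \<le> exp (sum (\<lambda>j. norm (f j - 1)) F') * (exp (sum (\<lambda>j. norm (f j - 1)) (F - F')) - 1)"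
  proof (rule mult_mono)
    show "norm (prod f F') \<le> exp (sum (\<lambda>j. norm (f j - 1)) F')" by (rule prod_norm_exp_bound)
    have "norm (prod (\<lambda>j. 1 + (f j - 1)) (F - F') - 1) \<le> prod (\<lambda>j. 1 + norm (f j - 1)) (F - F') - 1"
      by (rule norm_prod_minus1_le_gen)
    also have "\<dots> \<le> exp (sum (\<lambda>j. norm (f j - 1)) (F - F')) - 1"
      using prod_le_exp_sum[of "F - F'" "\<lambda>j. norm (f j - 1)"] by simp
    finally show "norm (prod (\<lambda>j. 1 + (f j - 1)) (F - F') - 1) \<le> exp (sum (\<lambda>j. norm (f j - 1)) (F - F')) - 1" .
  qed auto
  finally show ?thesis .
qed



lemma prod_net_converges:
  fixes f :: "'b \<Rightarrow> complex"
  assumes "(\<lambda>j. norm (f j - 1)) summable_on A"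
  shows "\<exists>p. (prod f \<longlongrightarrow> p) (finite_subsets_at_top A)"
proof -
  define g where "g j = norm (f j - 1)" for j
  from assms obtain L where lim: \<open>(sum g \<longlongrightarrow> L) (finite_subsets_at_top A)\<close>
    unfolding has_sum_def summable_on_def g_def by blast
  have gL: "sum g F \<le> L" if "finite F" "F \<subseteq> A" for F
    using finite_sum_le_has_sum[of g A L F] lim that by (auto simp: has_sum_def g_def)
  have \<open>\<exists>P. eventually P (finite_subsets_at_top A) \<and>
              (\<forall>F F'. P F \<and> P F' \<longrightarrow> dist (prod f F) (prod f F') < e)\<close> if \<open>e>0\<close> for e
  proof -
    define d where "d = ln (1 + e / (2 * exp L + 1)) / 2"
    have pos: "e / (2 * exp L + 1) > 0" using that by (simp add: add_pos_pos)
    hence "d > 0" unfolding d_def by simp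
    have ed: "exp L * (exp (2*d) - 1) < e/2"
    proof -
      have "exp (2*d) - 1 = e / (2 * exp L + 1)" unfolding d_def using pos by simp
      hence "exp L * (exp (2*d) - 1) = e * exp L / (2 * exp L + 1)" by simp
      also have "\<dots> < e/2" using that by (simp add: field_simps add_pos_pos)
      finally show ?thesis .
    qed
    define P where \<open>P F \<longleftrightarrow> finite F \<and> F \<subseteq> A \<and> dist (sum g F) L < d\<close> for F
    have ev_P: \<open>eventually P (finite_subsets_at_top A)\<close>
      using lim
      by (auto simp add: P_def[abs_def] \<open>0 < d\<close> eventually_conj_iff eventually_finite_subsets_at_top_weakI tendsto_iff)
    moreover have \<open>dist (prod f F1) (prod f F2) < e\<close> if \<open>P F1\<close> and \<open>P F2\<close> for F1 F2
    proof -
      from ev_P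
      obtain F' where \<open>finite F'\<close> and \<open>F' \<subseteq> A\<close> and P_sup_F': \<open>finite F \<and> F \<supseteq> F' \<and> F \<subseteq> A \<Longrightarrow> P F\<close> for F
        by atomize_elim (simp add: eventually_finite_subsets_at_top)
      define F where \<open>F = F' \<union> F1 \<union> F2\<close>
      have \<open>finite F\<close> and \<open>F \<subseteq> A\<close>
        using F_def P_def[abs_def] that \<open>finite F'\<close> \<open>F' \<subseteq> A\<close> by auto
      have dist_F: \<open>dist (sum g F) L < d\<close>
        by (metis F_def \<open>F \<subseteq> A\<close> P_def P_sup_F' \<open>finite F\<close> le_supE order_refl)
      have dist_F_subset: \<open>dist (prod f F) (prod f F') < e/2\<close> if F': \<open>F' \<subseteq> F\<close> \<open>P F'\<close> for F'
      proof -
        have fF': "finite F'" "F' \<subseteq> A" using F' P_def by auto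
        have "sum g F = sum g F' + sum g (F - F')"
          using \<open>finite F\<close> F' by (metis add.commute sum.subset_diff)
        hence s1: "sum g (F - F') < 2*d" using dist_F F' unfolding P_def dist_real_def by linarith
        have "dist (prod f F) (prod f F') \<le> exp (sum g F') * (exp (sum g (F - F')) - 1)"
          unfolding dist_norm g_def using prod_diff_bound[OF \<open>finite F\<close> F'(1), of f] by simp
        also have "\<dots> \<le> exp L * (exp (2*d) - 1)"
        proof (rule mult_mono)
          show "exp (sum g F') \<le> exp L" using gL[OF fF'] by simp
          show "exp (sum g (F - F')) - 1 \<le> exp (2 * d) - 1" using s1 by simp
          have "sum g (F - F') \<ge> 0" unfolding g_def by (rule sum_nonneg) simp
          thus "0 \<le> exp (sum g (F - F')) - 1" by simp
        qed simp
        also have "\<dots> < e/2" by (rule ed)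
        finally show ?thesis .
      qed
      have \<open>dist (prod f F1) (prod f F2) \<le> dist (prod f F) (prod f F1) + dist (prod f F) (prod f F2)\<close>
        by (rule dist_triangle3)
      also have \<open>\<dots> < e/2 + e/2\<close>
        by (intro add_strict_mono dist_F_subset that) (auto simp: F_def)
      finally show \<open>dist (prod f F1) (prod f F2) < e\<close> by simp
    qed
    ultimately show ?thesis by blast
  qed
  then have \<open>cauchy_filter (filtermap (prod f) (finite_subsets_at_top A))\<close>
    by (simp add: cauchy_filter_metric_filtermap)
  moreover have "complete (UNIV::complex set)"
    by (meson Cauchy_convergent UNIV_I complete_def convergent_def)
  ultimately obtain L' where \<open>(prod f \<longlongrightarrow> L') (finite_subsets_at_top A)\<close>
    using complete_uniform[where S=UNIV] by (force simp add: filterlim_def)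
  then show ?thesis by blast
qed



lemma prod_net_reindex:
  assumes \<open>inj_on h A\<close>
  shows \<open>(prod g \<longlongrightarrow> x) (finite_subsets_at_top (h ` A)) \<longleftrightarrow> (prod (g \<circ> h) \<longlongrightarrow> x) (finite_subsets_at_top A)\<close>
proof -
  have \<open>(prod g \<longlongrightarrow> x) (finite_subsets_at_top (h ` A)) \<longleftrightarrow> ((\<lambda>F. prod g (h ` F)) \<longlongrightarrow> x) (finite_subsets_at_top A)\<close>
    by (metis assms filterlim_filtermap filtermap_image_finite_subsets_at_top)
  also have \<open>\<dots> \<longleftrightarrow> (prod (g \<circ> h) \<longlongrightarrow> x) (finite_subsets_at_top A)\<close>
  proof (intro tendsto_cong eventually_finite_subsets_at_top_weakI prod.reindex)
    show "\<And>X. \<lbrakk>finite X; X \<subseteq> A\<rbrakk> \<Longrightarrow> inj_on h X"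
      using assms inj_on_subset by blast
  qed
  finally show ?thesis .
qed

lemma prod_net_cong:
  assumes "\<And>j. j \<in> A \<Longrightarrow> f j = g j"
  shows "(prod f \<longlongrightarrow> x) (finite_subsets_at_top A) \<longleftrightarrow> (prod g \<longlongrightarrow> x) (finite_subsets_at_top A)"
  by (intro tendsto_cong eventually_finite_subsets_at_top_weakI prod.cong) (use assms in auto)



lemma prod_net_union:
  fixes f :: "'b \<Rightarrow> complex"
  assumes "(prod f \<longlongrightarrow> a) (finite_subsets_at_top A)" "(prod f \<longlongrightarrow> b) (finite_subsets_at_top B)"
    and "A \<inter> B = {}"
  shows "(prod f \<longlongrightarrow> a * b) (finite_subsets_at_top (A \<union> B))"
proof -
  have lim: "filterlim (\<lambda>F. F \<inter> C) (finite_subsets_at_top C) (finite_subsets_at_top (A \<union> B))"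
    if "C \<subseteq> A \<union> B" for C
    unfolding filterlim_def le_filter_def eventually_filtermap
  proof (intro allI impI)
    fix P assume "eventually P (finite_subsets_at_top C)"
    then obtain X where X: "finite X" "X \<subseteq> C" "\<forall>Y. finite Y \<and> X \<subseteq> Y \<and> Y \<subseteq> C \<longrightarrow> P Y"
      by (auto simp: eventually_finite_subsets_at_top)
    show "eventually (\<lambda>F. P (F \<inter> C)) (finite_subsets_at_top (A \<union> B))"
      unfolding eventually_finite_subsets_at_top
      by (rule exI[of _ X]) (use X that in auto)
  qed
  have l1: "((\<lambda>F. prod f (F \<inter> A)) \<longlongrightarrow> a) (finite_subsets_at_top (A \<union> B))"
    using filterlim_compose[OF assms(1) lim[of A]] by (simp add: o_def)
  have l2: "((\<lambda>F. prod f (F \<inter> B)) \<longlongrightarrow> b) (finite_subsets_at_top (A \<union> B))"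
    using filterlim_compose[OF assms(2) lim[of B]] by (simp add: o_def)
  have "((\<lambda>F. prod f (F \<inter> A) * prod f (F \<inter> B)) \<longlongrightarrow> a * b) (finite_subsets_at_top (A \<union> B))"
    by (rule tendsto_mult[OF l1 l2])
  moreover have "eventually (\<lambda>F. prod f (F \<inter> A) * prod f (F \<inter> B) = prod f F) (finite_subsets_at_top (A \<union> B))"
  proof (rule eventually_finite_subsets_at_top_weakI)
    fix X assume "finite X" "X \<subseteq> A \<union> B"
    hence "X = (X \<inter> A) \<union> (X \<inter> B)" by auto
    moreover have "prod f ((X \<inter> A) \<union> (X \<inter> B)) = prod f (X \<inter> A) * prod f (X \<inter> B)"
      by (rule prod.union_disjoint) (use \<open>finite X\<close> assms(3) in auto)
    ultimately show "prod f (X \<inter> A) * prod f (X \<inter> B) = prod f X" by simp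
  qed
  ultimately show ?thesis by (rule Lim_transform_eventually)
qed





definition qT :: "complex \<Rightarrow> complex list \<Rightarrow> nat list \<Rightarrow> complex" where
  "qT x qs js = 1 - x * prod_list (map2 (\<lambda>q j. q ^ j) qs js)"

definition Lset :: "nat \<Rightarrow> nat list set" where
  "Lset n = {js. length js = n}"

lemma geo_finite_bound:
  fixes r :: real
  assumes "0 \<le> r" "r < 1" "finite J"
  shows "sum (\<lambda>j. r ^ j) J \<le> 1 / (1 - r)"
proof -
  have s: "summable (\<lambda>j. r ^ j)" using assms by (simp add: summable_geometric)
  have "sum (\<lambda>j. r ^ j) J \<le> suminf (\<lambda>j. r ^ j)"
    by (rule sum_le_suminf[OF s assms(3)]) (use assms in auto)
  also have "\<dots> = 1 / (1 - r)" using suminf_geometric[of r] assms by simp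
  finally show ?thesis .
qed

lemma box_sum_bound:
  fixes rs :: "real list"
  assumes "\<forall>r\<in>set rs. 0 \<le> r \<and> r < 1" "finite F" "F \<subseteq> Lset (length rs)"
  shows "sum (\<lambda>js. prod_list (map2 (\<lambda>r j. r ^ j) rs js)) F \<le> prod_list (map (\<lambda>r. 1 / (1 - r)) rs)"
  using assms
proof (induction rs arbitrary: F)
  case Nil
  hence "F = {} \<or> F = {[]}" by (auto simp: Lset_def)
  thus ?case by auto
next
  case (Cons r rs)
  define \<psi> where "\<psi> js = prod_list (map2 (\<lambda>r j. r ^ j) rs js)" for js
  define J where "J = hd ` F"
  define G where "G = tl ` F"
  have r: "0 \<le> r" "r < 1" using Cons.prems by auto
  have fin: "finite J" "finite G" using Cons.prems by (auto simp: J_def G_def)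
  have GL: "G \<subseteq> Lset (length rs)" using Cons.prems by (auto simp: G_def Lset_def)
  have psinn: "\<psi> js \<ge> 0" for js
    unfolding \<psi>_def using Cons.prems(1)
  proof (induction rs arbitrary: js)
    case (Cons a rs) thus ?case by (cases js) auto
  qed simp
  have Fsub: "F \<subseteq> (\<lambda>(j,js). j # js) ` (J \<times> G)"
  proof
    fix js assume "js \<in> F"
    with Cons.prems have "length js = Suc (length rs)" by (auto simp: Lset_def)
    then obtain j js' where "js = j # js'" by (cases js) auto
    thus "js \<in> (\<lambda>(j,js). j # js) ` (J \<times> G)" using \<open>js \<in> F\<close>
      by (force simp: J_def G_def)
  qed
  have "sum (\<lambda>js. prod_list (map2 (\<lambda>r j. r ^ j) (r # rs) js)) F
       \<le> sum (\<lambda>js. prod_list (map2 (\<lambda>r j. r ^ j) (r # rs) js)) ((\<lambda>(j,js). j # js) ` (J \<times> G))"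
  proof (rule sum_mono2)
    show "finite ((\<lambda>(j,js). j # js) ` (J \<times> G))" using fin by auto
    show "F \<subseteq> (\<lambda>(j,js). j # js) ` (J \<times> G)" by (rule Fsub)
    fix b assume "b \<in> (\<lambda>(j,js). j # js) ` (J \<times> G) - F"
    then obtain j js where "b = j # js" by auto
    thus "0 \<le> prod_list (map2 (\<lambda>r j. r ^ j) (r # rs) b)" using psinn[of js] r
      by (simp add: \<psi>_def)
  qed
  also have "\<dots> = (\<Sum>(j,js)\<in>J \<times> G. r ^ j * \<psi> js)"
    by (subst sum.reindex) (auto simp: inj_on_def \<psi>_def intro!: sum.cong)
  also have "\<dots> = (\<Sum>j\<in>J. r ^ j) * (\<Sum>js\<in>G. \<psi> js)"
    by (simp add: sum_product sum.cartesian_product)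
  also have "\<dots> \<le> (1 / (1 - r)) * prod_list (map (\<lambda>r. 1 / (1 - r)) rs)"
  proof (rule mult_mono)
    show "(\<Sum>j\<in>J. r ^ j) \<le> 1 / (1 - r)" by (rule geo_finite_bound) (use r fin in auto)
    show "(\<Sum>js\<in>G. \<psi> js) \<le> prod_list (map (\<lambda>r. 1 / (1 - r)) rs)"
      unfolding \<psi>_def by (rule Cons.IH) (use Cons.prems fin GL in auto)
    show "0 \<le> 1 / (1 - r)" using r by simp
    show "0 \<le> (\<Sum>js\<in>G. \<psi> js)" using psinn by (simp add: sum_nonneg)
  qed
  finally show ?case by simp
qed

lemma norm_prod_list_map2:
  fixes qs :: "complex list"
  shows "norm (prod_list (map2 (\<lambda>q j. q ^ j) qs js)) = prod_list (map2 (\<lambda>r j. r ^ j) (map norm qs) js)"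
proof (induction qs arbitrary: js)
  case (Cons a qs) thus ?case by (cases js) (auto simp: norm_mult norm_power)
qed simp

lemma qT_summable:
  assumes "\<forall>q\<in>set qs. norm q < 1"
  shows "(\<lambda>js. norm (qT x qs js - 1)) summable_on Lset (length qs)"
proof (rule nonneg_bdd_above_summable_on)
  show "bdd_above (sum (\<lambda>js. norm (qT x qs js - 1)) ` {F. F \<subseteq> Lset (length qs) \<and> finite F})"
  proof (rule bdd_aboveI2)
    fix F assume F: "F \<in> {F. F \<subseteq> Lset (length qs) \<and> finite F}"
    have "sum (\<lambda>js. norm (qT x qs js - 1)) F
        = norm x * sum (\<lambda>js. prod_list (map2 (\<lambda>r j. r ^ j) (map norm qs) js)) F"
      by (simp add: qT_def norm_mult norm_prod_list_map2 sum_distrib_left)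
    also have "\<dots> \<le> norm x * prod_list (map (\<lambda>r. 1 / (1 - r)) (map norm qs))"
      by (intro mult_left_mono box_sum_bound) (use F assms in auto)
    finally show "sum (\<lambda>js. norm (qT x qs js - 1)) F \<le> norm x * prod_list (map (\<lambda>r. 1 / (1 - r)) (map norm qs))" .
  qed
qed auto

lemma finite_multi_idx: "finite (multi_idx n N)"
proof -
  have "multi_idx n N = {xs. set xs \<subseteq> {..<N} \<and> length xs = n}" by (auto simp: multi_idx_def)
  thus ?thesis by (simp add: finite_lists_length_eq)
qed

lemma qpoch_conv_tendsto:
  assumes "\<forall>q\<in>set qs. norm q < 1"
  shows "(prod (qT x qs) \<longlongrightarrow> qpoch_conv x qs) (finite_subsets_at_top (Lset (length qs)))"
proof -
  obtain p where p: "(prod (qT x qs) \<longlongrightarrow> p) (finite_subsets_at_top (Lset (length qs)))"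
    using prod_net_converges[OF qT_summable[OF assms]] by blast
  have fl: "filterlim (multi_idx (length qs)) (finite_subsets_at_top (Lset (length qs))) sequentially"
    unfolding filterlim_def le_filter_def eventually_filtermap
  proof (intro allI impI)
    fix P assume "eventually P (finite_subsets_at_top (Lset (length qs)))"
    then obtain X where X: "finite X" "X \<subseteq> Lset (length qs)"
      "\<forall>Y. finite Y \<and> X \<subseteq> Y \<and> Y \<subseteq> Lset (length qs) \<longrightarrow> P Y"
      by (auto simp: eventually_finite_subsets_at_top)
    have "finite (\<Union>js\<in>X. set js)" using X(1) by auto
    then obtain N where N: "(\<Union>js\<in>X. set js) \<subseteq> {..<N}" using finite_nat_bounded by blast
    show "eventually (\<lambda>n. P (multi_idx (length qs) n)) sequentially"
      unfolding eventually_sequentially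
    proof (intro exI allI impI)
      fix n assume "N \<le> n"
      show "P (multi_idx (length qs) n)"
        using X N \<open>N \<le> n\<close> finite_multi_idx by (intro X(3)[rule_format]) (force simp: multi_idx_def Lset_def)+
    qed
  qed
  have eq: "qpoch_box x qs = (\<lambda>N. prod (qT x qs) (multi_idx (length qs) N))"
    by (simp add: fun_eq_iff qpoch_box_def qT_def)
  have "(qpoch_box x qs) \<longlonglongrightarrow> p"
    unfolding eq using filterlim_compose[OF p fl] by (simp add: o_def)
  hence "qpoch_conv x qs = p" unfolding qpoch_conv_def by (rule limI)
  thus ?thesis using p by simp
qed



lemma qpoch_conv_reindex:
  assumes "\<forall>q\<in>set qs'. norm q < 1"
    and "inj_on h (Lset (length qs'))" "h ` Lset (length qs') = B"
    and "\<And>js. js \<in> Lset (length qs') \<Longrightarrow> qT x qs (h js) = qT x' qs' js"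
  shows "(prod (qT x qs) \<longlongrightarrow> qpoch_conv x' qs') (finite_subsets_at_top B)"
proof -
  have "(prod (qT x' qs') \<longlongrightarrow> qpoch_conv x' qs') (finite_subsets_at_top (Lset (length qs')))"
    by (rule qpoch_conv_tendsto[OF assms(1)])
  hence "(prod (qT x qs \<circ> h) \<longlongrightarrow> qpoch_conv x' qs') (finite_subsets_at_top (Lset (length qs')))"
    by (subst prod_net_cong[where g = "qT x' qs'"]) (use assms(4) in auto)
  thus ?thesis using prod_net_reindex[OF assms(2)] assms(3) by auto
qed

lemma len2_cases:
  assumes "js \<in> Lset (Suc (Suc n))"
  obtains i j r where "js = i # j # r" "length r = n"
proof -
  from assms have "length js = Suc (Suc n)" by (simp add: Lset_def)
  then obtain i js' where "js = i # js'" "length js' = Suc n" by (cases js) auto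
  moreover then obtain j r where "js' = j # r" "length r = n" by (cases js') auto
  ultimately show ?thesis using that by blast
qed

lemma qT_cons2: "qT x (a # b # R) (i # j # r) = 1 - x * (a ^ i * (b ^ j * prod_list (map2 (\<lambda>q j. q ^ j) R r)))"
  by (simp add: qT_def)

lemma qpoch_conv_swap:
  assumes "norm a < 1" "norm b < 1" "\<forall>q\<in>set R. norm q < 1"
  shows "qpoch_conv x (b # a # R) = qpoch_conv x (a # b # R)"
proof -
  define h where "h js = js!1 # js!0 # drop 2 js" for js :: "nat list"
  define n where "n = length R"
  have L: "Lset (length (a # b # R)) = Lset (Suc (Suc n))" "Lset (length (b # a # R)) = Lset (Suc (Suc n))"
    by (simp_all add: n_def)
  have 1: "(prod (qT x (b # a # R)) \<longlongrightarrow> qpoch_conv x (a # b # R)) (finite_subsets_at_top (Lset (Suc (Suc n))))"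
  proof (rule qpoch_conv_reindex[where h = h, of "a # b # R", unfolded L])
    show "\<forall>q\<in>set (a # b # R). norm q < 1" using assms by auto
    show "inj_on h (Lset (Suc (Suc n)))"
    proof (rule inj_onI)
      fix u v assume "u \<in> Lset (Suc (Suc n))" "v \<in> Lset (Suc (Suc n))" "h u = h v"
      thus "u = v" by (elim len2_cases) (auto simp: h_def)
    qed
    show "h ` Lset (Suc (Suc n)) = Lset (Suc (Suc n))"
    proof
      show "h ` Lset (Suc (Suc n)) \<subseteq> Lset (Suc (Suc n))"
        by (auto elim!: len2_cases simp: h_def Lset_def)
      show "Lset (Suc (Suc n)) \<subseteq> h ` Lset (Suc (Suc n))"
      proof
        fix js assume "js \<in> Lset (Suc (Suc n))"
        then obtain i j r where "js = i # j # r" "length r = n" by (rule len2_cases)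
        thus "js \<in> h ` Lset (Suc (Suc n))"
          by (intro image_eqI[of _ _ "j # i # r"]) (auto simp: h_def Lset_def)
      qed
    qed
    fix js assume "js \<in> Lset (Suc (Suc n))"
    then obtain i j r where "js = i # j # r" "length r = n" by (rule len2_cases)
    thus "qT x (b # a # R) (h js) = qT x (a # b # R) js"
      by (simp add: h_def qT_cons2 algebra_simps)
  qed
  have 2: "(prod (qT x (b # a # R)) \<longlongrightarrow> qpoch_conv x (b # a # R)) (finite_subsets_at_top (Lset (Suc (Suc n))))"
    using qpoch_conv_tendsto[of "b # a # R" x] assms unfolding L by auto
  show ?thesis using tendsto_unique[OF _ 2 1] by simp
qed

lemma qpoch_conv_split:
  assumes "norm a < 1" "norm b < 1" "\<forall>q\<in>set R. norm q < 1"
  shows "qpoch_conv x (a # b # R) = qpoch_conv x (a # a * b # R) * qpoch_conv (b * x) (b # a * b # R)"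
proof -
  define h1 where "h1 js = (js!0 + js!1) # js!1 # drop 2 js" for js :: "nat list"
  define h2 where "h2 js = js!1 # (js!0 + js!1 + 1) # drop 2 js" for js :: "nat list"
  define n where "n = length R"
  define A1 where "A1 = {js \<in> Lset (Suc (Suc n)). js!1 \<le> js!0}"
  define A2 where "A2 = {js \<in> Lset (Suc (Suc n)). js!0 < js!1}"
  have ab: "norm (a * b) < 1"
  proof -
    have "norm a * norm b \<le> norm a" using assms(2) by (simp add: mult_left_le)
    thus ?thesis using assms(1) by (simp add: norm_mult)
  qed
  have L: "Lset (length (a # b # R)) = Lset (Suc (Suc n))" "\<And>c d. Lset (length (c # d # R)) = Lset (Suc (Suc n))"
    by (simp_all add: n_def)
  have 1: "(prod (qT x (a # b # R)) \<longlongrightarrow> qpoch_conv x (a # a * b # R)) (finite_subsets_at_top A1)"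
  proof (rule qpoch_conv_reindex[where h = h1 and qs' = "a # a * b # R" and x' = x, unfolded L])
    show "\<forall>q\<in>set (a # a * b # R). norm q < 1" using assms ab by auto
    show "inj_on h1 (Lset (Suc (Suc n)))"
    proof (rule inj_onI)
      fix u v assume "u \<in> Lset (Suc (Suc n))" "v \<in> Lset (Suc (Suc n))" "h1 u = h1 v"
      thus "u = v" by (elim len2_cases) (auto simp: h1_def)
    qed
    show "h1 ` Lset (Suc (Suc n)) = A1"
    proof
      show "h1 ` Lset (Suc (Suc n)) \<subseteq> A1"
        by (auto elim!: len2_cases simp: h1_def Lset_def A1_def)
      show "A1 \<subseteq> h1 ` Lset (Suc (Suc n))"
      proof
        fix js assume "js \<in> A1"
        then obtain i j r where "js = i # j # r" "length r = n" "j \<le> i" unfolding A1_def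
          by (auto elim: len2_cases)
        thus "js \<in> h1 ` Lset (Suc (Suc n))"
          by (intro image_eqI[of _ _ "(i - j) # j # r"]) (auto simp: h1_def Lset_def)
      qed
    qed
    fix js assume "js \<in> Lset (Suc (Suc n))"
    then obtain i j r where "js = i # j # r" "length r = n" by (rule len2_cases)
    thus "qT x (a # b # R) (h1 js) = qT x (a # a * b # R) js"
      by (simp add: h1_def qT_cons2 power_add power_mult_distrib algebra_simps)
  qed
  have 2: "(prod (qT x (a # b # R)) \<longlongrightarrow> qpoch_conv (b * x) (b # a * b # R)) (finite_subsets_at_top A2)"
  proof (rule qpoch_conv_reindex[where h = h2 and qs' = "b # a * b # R" and x' = "b * x", unfolded L])
    show "\<forall>q\<in>set (b # a * b # R). norm q < 1" using assms ab by auto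
    show "inj_on h2 (Lset (Suc (Suc n)))"
    proof (rule inj_onI)
      fix u v assume "u \<in> Lset (Suc (Suc n))" "v \<in> Lset (Suc (Suc n))" "h2 u = h2 v"
      thus "u = v" by (elim len2_cases) (auto simp: h2_def)
    qed
    show "h2 ` Lset (Suc (Suc n)) = A2"
    proof
      show "h2 ` Lset (Suc (Suc n)) \<subseteq> A2"
        by (auto elim!: len2_cases simp: h2_def Lset_def A2_def)
      show "A2 \<subseteq> h2 ` Lset (Suc (Suc n))"
      proof
        fix js assume "js \<in> A2"
        then obtain i j r where "js = i # j # r" "length r = n" "i < j" unfolding A2_def
          by (auto elim: len2_cases)
        thus "js \<in> h2 ` Lset (Suc (Suc n))"
          by (intro image_eqI[of _ _ "(j - i - 1) # i # r"]) (auto simp: h2_def Lset_def)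
      qed
    qed
    fix js assume "js \<in> Lset (Suc (Suc n))"
    then obtain i j r where "js = i # j # r" "length r = n" by (rule len2_cases)
    thus "qT x (a # b # R) (h2 js) = qT (b * x) (b # a * b # R) js"
      by (simp add: h2_def qT_cons2 power_add power_mult_distrib algebra_simps)
  qed
  have U: "A1 \<union> A2 = Lset (Suc (Suc n))" "A1 \<inter> A2 = {}" by (auto simp: A1_def A2_def)
  have 3: "(prod (qT x (a # b # R)) \<longlongrightarrow> qpoch_conv x (a # a * b # R) * qpoch_conv (b * x) (b # a * b # R))
      (finite_subsets_at_top (Lset (Suc (Suc n))))"
    using prod_net_union[OF 1 2 U(2)] U(1) by simp
  have 4: "(prod (qT x (a # b # R)) \<longlongrightarrow> qpoch_conv x (a # b # R)) (finite_subsets_at_top (Lset (Suc (Suc n))))"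
    using qpoch_conv_tendsto[of "a # b # R" x] assms unfolding L by auto
  show ?thesis using tendsto_unique[OF _ 4 3] by simp
qed



definition gg :: "nat \<Rightarrow> complex \<Rightarrow> complex" where
  "gg s z = (if even s then z else inverse z)"

lemma qpoch_cons2:
  assumes "P = prod_list (filter (\<lambda>q. norm q > 1) R0)" "k = length (filter (\<lambda>q. norm q > 1) R0)"
    "R = map (\<lambda>q. if norm q > 1 then inverse q else q) R0" "X = inverse P * x"
  shows "qpoch x (c # d # R0) = gg ((if norm c > 1 then 1 else 0) + (if norm d > 1 then 1 else 0) + k)
     (qpoch_conv ((if norm c > 1 then inverse c else 1) * (if norm d > 1 then inverse d else 1) * X)
       ((if norm c > 1 then inverse c else c) # (if norm d > 1 then inverse d else d) # R))"
  using assms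
  by (cases "norm c > 1"; cases "norm d > 1") (simp_all add: qpoch_def gg_def Let_def mult.assoc)

lemma gg_ne0: "gg s z \<noteq> 0 \<Longrightarrow> z \<noteq> 0" by (auto simp: gg_def split: if_splits)
lemma gg_SS: "gg (Suc (Suc k)) z = gg k z" by (simp add: gg_def)

lemma close1: "gg k A \<noteq> 0 \<Longrightarrow> gg k B \<noteq> 0 \<Longrightarrow> gg (Suc k) C \<noteq> 0 \<Longrightarrow> A = B * C \<Longrightarrow>
   gg k A / gg k B = inverse (gg (Suc k) C)"
  by (cases "even k") (auto simp: gg_def field_simps)
lemma close2: "gg (Suc k) A \<noteq> 0 \<Longrightarrow> gg k B \<noteq> 0 \<Longrightarrow> gg k C \<noteq> 0 \<Longrightarrow> C = B * A \<Longrightarrow>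
   gg (Suc k) A / gg k B = inverse (gg k C)"
  by (cases "even k") (auto simp: gg_def field_simps)
lemma close3: "gg (Suc k) A \<noteq> 0 \<Longrightarrow> gg (Suc k) B \<noteq> 0 \<Longrightarrow> gg (Suc k) C \<noteq> 0 \<Longrightarrow> B = A * C \<Longrightarrow>
   gg (Suc k) A / gg (Suc k) B = inverse (gg (Suc k) C)"
  by (cases "even k") (auto simp: gg_def field_simps)
lemma close5: "gg (Suc k) A \<noteq> 0 \<Longrightarrow> gg k B \<noteq> 0 \<Longrightarrow> gg k C \<noteq> 0 \<Longrightarrow> C = A * B \<Longrightarrow>
   gg (Suc k) A / gg k B = inverse (gg k C)"
  by (cases "even k") (auto simp: gg_def field_simps)
lemma close6: "gg k A \<noteq> 0 \<Longrightarrow> gg k B \<noteq> 0 \<Longrightarrow> gg (Suc k) C \<noteq> 0 \<Longrightarrow> A = B * C \<Longrightarrow>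
   gg k A / gg k B = inverse (gg (Suc k) C)"
  by (rule close1)


lemma norm_inv_gt1: "norm (b::complex) < 1 \<Longrightarrow> b \<noteq> 0 \<Longrightarrow> norm (inverse b) > 1"
  by (simp add: norm_inverse one_less_inverse_iff)
lemma norm_inv_lt1: "norm (b::complex) > 1 \<Longrightarrow> norm (inverse b) < 1"
  by (simp add: norm_inverse inverse_less_1_iff)

lemma norm_mult_lt1: "norm (a::complex) < 1 \<Longrightarrow> norm b < 1 \<Longrightarrow> norm (a * b) < 1"
proof -
  assume "norm a < 1" "norm b < 1"
  have "norm a * norm b \<le> norm a" using \<open>norm b < 1\<close> by (simp add: mult_left_le)
  thus ?thesis using \<open>norm a < 1\<close> by (simp add: norm_mult)
qed



lemma case1:
  fixes a b x X :: complex and R0 R :: "complex list" and k :: nat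
  assumes D: "\<And>c d. qpoch x (c # d # R0) = gg ((if norm c > 1 then 1 else 0) + (if norm d > 1 then 1 else 0) + k)
     (qpoch_conv ((if norm c > 1 then inverse c else 1) * (if norm d > 1 then inverse d else 1) * X)
       ((if norm c > 1 then inverse c else c) # (if norm d > 1 then inverse d else d) # R))"
    and sR: "\<forall>q\<in>set R. norm q < 1" and a0: "a \<noteq> 0" and b0: "b \<noteq> 0"
    and z1: "qpoch x (a # b # R0) \<noteq> 0" and z2: "qpoch x (a # a * b # R0) \<noteq> 0"
    and z3: "qpoch x (inverse b # a * b # R0) \<noteq> 0"
    and N: "norm a < 1" "norm b < 1"
  shows "qpoch x (a # b # R0) / qpoch x (a # a * b # R0) = inverse (qpoch x (inverse b # a * b # R0))"
proof -
  note F = qpoch_conv_split[OF _ _ sR] qpoch_conv_swap[OF _ _ sR]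
    have nab1: "norm (a*b) < 1" using N by (simp add: norm_mult_lt1)
    have T1: "qpoch x (a # b # R0) = gg k (qpoch_conv X (a # b # R))" using N by (simp add: D)
    have T2: "qpoch x (a # a*b # R0) = gg k (qpoch_conv X (a # a*b # R))" using N nab1 by (simp add: D)
    have T3: "qpoch x (inverse b # a*b # R0) = gg (Suc k) (qpoch_conv (b * X) (b # a*b # R))"
      using N nab1 b0 norm_inv_gt1[of b] by (simp add: D)
    show ?thesis unfolding T1 T2 T3
      by (rule close1) (use z1 z2 z3 T1 T2 T3 F(1)[of a b X] N in auto)
qed



lemma case2:
  fixes a b x X :: complex and R0 R :: "complex list" and k :: nat
  assumes D: "\<And>c d. qpoch x (c # d # R0) = gg ((if norm c > 1 then 1 else 0) + (if norm d > 1 then 1 else 0) + k)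
     (qpoch_conv ((if norm c > 1 then inverse c else 1) * (if norm d > 1 then inverse d else 1) * X)
       ((if norm c > 1 then inverse c else c) # (if norm d > 1 then inverse d else d) # R))"
    and sR: "\<forall>q\<in>set R. norm q < 1" and a0: "a \<noteq> 0" and b0: "b \<noteq> 0"
    and z1: "qpoch x (a # b # R0) \<noteq> 0" and z2: "qpoch x (a # a * b # R0) \<noteq> 0"
    and z3: "qpoch x (inverse b # a * b # R0) \<noteq> 0"
    and N: "norm a < 1" "norm b > 1" "norm (a*b) < 1"
  shows "qpoch x (a # b # R0) / qpoch x (a # a * b # R0) = inverse (qpoch x (inverse b # a * b # R0))"
proof -
  note F = qpoch_conv_split[OF _ _ sR] qpoch_conv_swap[OF _ _ sR]
    define c where "c = inverse b"
    have c: "norm c < 1" using N norm_inv_lt1 c_def by auto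
    have T1: "qpoch x (a # b # R0) = gg (Suc k) (qpoch_conv (c * X) (a # c # R))" using N by (simp add: D c_def)
    have T2: "qpoch x (a # a*b # R0) = gg k (qpoch_conv X (a # a*b # R))" using N by (simp add: D)
    have T3: "qpoch x (inverse b # a*b # R0) = gg k (qpoch_conv X (c # a*b # R))"
      using N c by (simp add: D c_def)
    have e: "a * b * c = a" using b0 by (simp add: c_def)
    have rel: "qpoch_conv X (c # a*b # R) = qpoch_conv X (a # a*b # R) * qpoch_conv (c * X) (a # c # R)"
      using F(2)[of "a*b" c X] F(1)[of "a*b" c X] F(2)[of a "a*b" X] F(2)[of a c "c*X"] N c
      unfolding e by (simp add: mult.commute)
    show ?thesis unfolding T1 T2 T3
      by (rule close2) (use z1 z2 z3 T1 T2 T3 rel in auto)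
qed



lemma case3:
  fixes a b x X :: complex and R0 R :: "complex list" and k :: nat
  assumes D: "\<And>c d. qpoch x (c # d # R0) = gg ((if norm c > 1 then 1 else 0) + (if norm d > 1 then 1 else 0) + k)
     (qpoch_conv ((if norm c > 1 then inverse c else 1) * (if norm d > 1 then inverse d else 1) * X)
       ((if norm c > 1 then inverse c else c) # (if norm d > 1 then inverse d else d) # R))"
    and sR: "\<forall>q\<in>set R. norm q < 1" and a0: "a \<noteq> 0" and b0: "b \<noteq> 0"
    and z1: "qpoch x (a # b # R0) \<noteq> 0" and z2: "qpoch x (a # a * b # R0) \<noteq> 0"
    and z3: "qpoch x (inverse b # a * b # R0) \<noteq> 0"
    and N: "norm a < 1" "norm b > 1" "norm (a*b) > 1"
  shows "qpoch x (a # b # R0) / qpoch x (a # a * b # R0) = inverse (qpoch x (inverse b # a * b # R0))"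
proof -
  note F = qpoch_conv_split[OF _ _ sR] qpoch_conv_swap[OF _ _ sR]
    define c where "c = inverse b"
    define e where "e = inverse (a * b)"
    have c: "norm c < 1" using N norm_inv_lt1 c_def by auto
    have e: "norm e < 1" unfolding e_def by (rule norm_inv_lt1) (use N in simp)
    have T1: "qpoch x (a # b # R0) = gg (Suc k) (qpoch_conv (c * X) (a # c # R))" using N by (simp add: D c_def)
    have T2: "qpoch x (a # a*b # R0) = gg (Suc k) (qpoch_conv (e * X) (a # e # R))" using N by (simp add: D e_def)
    have T3: "qpoch x (inverse b # a*b # R0) = gg (Suc k) (qpoch_conv (e * X) (c # e # R))"
      using N c by (simp add: D c_def e_def)
    have ea: "e * a = c" using a0 b0 by (simp add: c_def e_def field_simps)
    have ea2: "a * (e * X) = c * X" by (metis ea mult.assoc mult.commute)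
    have s1: "qpoch_conv (e * X) (a # e # R) = qpoch_conv (e * X) (e # a # R)"
      by (rule F(2)[OF e N(1)])
    have s2: "qpoch_conv (e * X) (e # a # R) = qpoch_conv (e * X) (e # c # R) * qpoch_conv (c * X) (a # c # R)"
      using F(1)[OF e N(1), of "e * X"] unfolding ea ea2 .
    have s3: "qpoch_conv (e * X) (e # c # R) = qpoch_conv (e * X) (c # e # R)"
      by (rule F(2)[OF c e])
    have rel: "qpoch_conv (e * X) (a # e # R) = qpoch_conv (c * X) (a # c # R) * qpoch_conv (e * X) (c # e # R)"
      unfolding s1 s2 s3 by (simp add: mult.commute)
    show ?thesis unfolding T1 T2 T3
      by (rule close3) (use z1 z2 z3 T1 T2 T3 rel in auto)
qed



lemma case4:
  fixes a b x X :: complex and R0 R :: "complex list" and k :: nat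
  assumes D: "\<And>c d. qpoch x (c # d # R0) = gg ((if norm c > 1 then 1 else 0) + (if norm d > 1 then 1 else 0) + k)
     (qpoch_conv ((if norm c > 1 then inverse c else 1) * (if norm d > 1 then inverse d else 1) * X)
       ((if norm c > 1 then inverse c else c) # (if norm d > 1 then inverse d else d) # R))"
    and sR: "\<forall>q\<in>set R. norm q < 1" and a0: "a \<noteq> 0" and b0: "b \<noteq> 0"
    and z1: "qpoch x (a # b # R0) \<noteq> 0" and z2: "qpoch x (a # a * b # R0) \<noteq> 0"
    and z3: "qpoch x (inverse b # a * b # R0) \<noteq> 0"
    and N: "norm a > 1" "norm b < 1" "norm (a*b) < 1"
  shows "qpoch x (a # b # R0) / qpoch x (a # a * b # R0) = inverse (qpoch x (inverse b # a * b # R0))"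
proof -
  note F = qpoch_conv_split[OF _ _ sR] qpoch_conv_swap[OF _ _ sR]
    define c where "c = inverse a"
    have c: "norm c < 1" using N norm_inv_lt1 c_def by auto
    have T1: "qpoch x (a # b # R0) = gg (Suc k) (qpoch_conv (c * X) (c # b # R))" using N by (simp add: D c_def)
    have T2: "qpoch x (a # a*b # R0) = gg (Suc k) (qpoch_conv (c * X) (c # a*b # R))" using N by (simp add: D c_def)
    have T3: "qpoch x (inverse b # a*b # R0) = gg (Suc k) (qpoch_conv (b * X) (b # a*b # R))"
      using N b0 norm_inv_gt1[of b] by (simp add: D)
    have cd: "c * (a * b) = b" using a0 by (simp add: c_def)
    have cd2: "a * b * (c * X) = b * X" using a0 by (simp add: c_def)
    have rel: "qpoch_conv (c * X) (c # a*b # R) = qpoch_conv (c * X) (c # b # R) * qpoch_conv (b * X) (b # a*b # R)"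
      using F(1)[of c "a*b" "c*X"] F(2)[of "a*b" b "b*X"] N c
      unfolding cd cd2 by (simp add: mult.commute)
    show ?thesis unfolding T1 T2 T3
      by (rule close3) (use z1 z2 z3 T1 T2 T3 rel in auto)
qed



lemma case5:
  fixes a b x X :: complex and R0 R :: "complex list" and k :: nat
  assumes D: "\<And>c d. qpoch x (c # d # R0) = gg ((if norm c > 1 then 1 else 0) + (if norm d > 1 then 1 else 0) + k)
     (qpoch_conv ((if norm c > 1 then inverse c else 1) * (if norm d > 1 then inverse d else 1) * X)
       ((if norm c > 1 then inverse c else c) # (if norm d > 1 then inverse d else d) # R))"
    and sR: "\<forall>q\<in>set R. norm q < 1" and a0: "a \<noteq> 0" and b0: "b \<noteq> 0"
    and z1: "qpoch x (a # b # R0) \<noteq> 0" and z2: "qpoch x (a # a * b # R0) \<noteq> 0"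
    and z3: "qpoch x (inverse b # a * b # R0) \<noteq> 0"
    and N: "norm a > 1" "norm b < 1" "norm (a*b) > 1"
  shows "qpoch x (a # b # R0) / qpoch x (a # a * b # R0) = inverse (qpoch x (inverse b # a * b # R0))"
proof -
  note F = qpoch_conv_split[OF _ _ sR] qpoch_conv_swap[OF _ _ sR]
    define c where "c = inverse a"
    define e where "e = inverse (a * b)"
    have c: "norm c < 1" using N norm_inv_lt1 c_def by auto
    have e: "norm e < 1" unfolding e_def by (rule norm_inv_lt1) (use N in simp)
    have T1: "qpoch x (a # b # R0) = gg (Suc k) (qpoch_conv (c * X) (c # b # R))" using N by (simp add: D c_def)
    have T2: "qpoch x (a # a*b # R0) = gg k (qpoch_conv (c * e * X) (c # e # R))"
      using N by (simp add: D c_def e_def mult.assoc gg_SS)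
    have be: "b * e = c" using a0 b0 by (simp add: c_def e_def field_simps)
    have T3a: "qpoch x (inverse b # a*b # R0) = gg k (qpoch_conv (b * e * X) (b # e # R))"
      using N b0 norm_inv_gt1[of b] by (simp add: D e_def mult.assoc gg_SS)
    have T3: "qpoch x (inverse b # a*b # R0) = gg k (qpoch_conv (c * X) (b # e # R))"
      using T3a unfolding be .
    have be2: "e * (c * X) = c * e * X" by (simp add: mult.commute)
    have s1: "qpoch_conv (c * X) (b # e # R) = qpoch_conv (c * X) (b # c # R) * qpoch_conv (c * e * X) (e # c # R)"
      using F(1)[OF N(2) e, of "c * X"] unfolding be be2 .
    have s2: "qpoch_conv (c * X) (c # b # R) = qpoch_conv (c * X) (b # c # R)"
      by (rule F(2)[OF N(2) c])
    have s3: "qpoch_conv (c * e * X) (c # e # R) = qpoch_conv (c * e * X) (e # c # R)"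
      by (rule F(2)[OF e c])
    have rel: "qpoch_conv (c * X) (b # e # R) = qpoch_conv (c * X) (c # b # R) * qpoch_conv (c * e * X) (c # e # R)"
      unfolding s1 s2 s3 ..
    show ?thesis unfolding T1 T2 T3
      by (rule close5) (use z1 z2 z3 T1 T2 T3 rel in auto)
qed



lemma case6:
  fixes a b x X :: complex and R0 R :: "complex list" and k :: nat
  assumes D: "\<And>c d. qpoch x (c # d # R0) = gg ((if norm c > 1 then 1 else 0) + (if norm d > 1 then 1 else 0) + k)
     (qpoch_conv ((if norm c > 1 then inverse c else 1) * (if norm d > 1 then inverse d else 1) * X)
       ((if norm c > 1 then inverse c else c) # (if norm d > 1 then inverse d else d) # R))"
    and sR: "\<forall>q\<in>set R. norm q < 1" and a0: "a \<noteq> 0" and b0: "b \<noteq> 0"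
    and z1: "qpoch x (a # b # R0) \<noteq> 0" and z2: "qpoch x (a # a * b # R0) \<noteq> 0"
    and z3: "qpoch x (inverse b # a * b # R0) \<noteq> 0"
    and N: "norm a > 1" "norm b > 1"
  shows "qpoch x (a # b # R0) / qpoch x (a # a * b # R0) = inverse (qpoch x (inverse b # a * b # R0))"
proof -
  note F = qpoch_conv_split[OF _ _ sR] qpoch_conv_swap[OF _ _ sR]
    define c where "c = inverse a"
    define d where "d = inverse b"
    define e where "e = inverse (a * b)"
    have nab1: "norm (a*b) > 1" using N by (simp add: norm_mult less_1_mult)
    have c: "norm c < 1" using N norm_inv_lt1 c_def by auto
    have d: "norm d < 1" using N norm_inv_lt1 d_def by auto
    have e: "norm e < 1" unfolding e_def by (rule norm_inv_lt1) (use nab1 in simp)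
    have cd: "d * c = e" by (simp add: c_def d_def e_def mult.commute)
    have T1: "qpoch x (a # b # R0) = gg k (qpoch_conv (e * X) (c # d # R))"
      using N by (simp add: D c_def d_def e_def gg_SS mult.assoc)
    have T2: "qpoch x (a # a*b # R0) = gg k (qpoch_conv (c * (e * X)) (c # e # R))"
      using N nab1 by (simp add: D c_def e_def gg_SS mult.assoc)
    have T3: "qpoch x (inverse b # a*b # R0) = gg (Suc k) (qpoch_conv (e * X) (d # e # R))"
      using N nab1 d by (simp add: D d_def e_def mult.assoc)
    have s1: "qpoch_conv (e * X) (c # d # R) = qpoch_conv (e * X) (d # c # R)"
      by (rule F(2)[OF d c])
    have s2: "qpoch_conv (e * X) (d # c # R) = qpoch_conv (e * X) (d # e # R) * qpoch_conv (c * (e * X)) (c # e # R)"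
      using F(1)[OF d c, of "e * X"] unfolding cd .
    have rel: "qpoch_conv (e * X) (c # d # R) = qpoch_conv (c * (e * X)) (c # e # R) * qpoch_conv (e * X) (d # e # R)"
      unfolding s1 s2 by (simp add: mult.commute)
    show ?thesis unfolding T1 T2 T3
      by (rule close1) (use z1 z2 z3 T1 T2 T3 rel in auto)
qed


lemma main_alg:
  fixes a b x :: complex
  assumes na: "norm a \<noteq> 1" and nb: "norm b \<noteq> 1" and nab: "norm (a * b) \<noteq> 1"
    and nR: "\<forall>r\<in>set R0. norm r \<noteq> 1" and a0: "a \<noteq> 0" and b0: "b \<noteq> 0"
    and z1: "qpoch x (a # b # R0) \<noteq> 0" and z2: "qpoch x (a # a * b # R0) \<noteq> 0"
    and z3: "qpoch x (inverse b # a * b # R0) \<noteq> 0"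
  shows "qpoch x (a # b # R0) / qpoch x (a # a * b # R0) = inverse (qpoch x (inverse b # a * b # R0))"
proof -
  define P where "P = prod_list (filter (\<lambda>q. norm q > 1) R0)"
  define k where "k = length (filter (\<lambda>q. norm q > 1) R0)"
  define R where "R = map (\<lambda>q. if norm q > 1 then inverse q else q) R0"
  define X where "X = inverse P * x"
  note D = qpoch_cons2[OF P_def k_def R_def X_def]
  have sR: "\<forall>q\<in>set R. norm q < 1"
    using nR by (auto simp: R_def norm_inv_lt1 not_less)
  consider "norm a < 1" "norm b < 1" | "norm a < 1" "norm b > 1" "norm (a*b) < 1"
    | "norm a < 1" "norm b > 1" "norm (a*b) > 1" | "norm a > 1" "norm b < 1" "norm (a*b) < 1"
    | "norm a > 1" "norm b < 1" "norm (a*b) > 1" | "norm a > 1" "norm b > 1"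
    using na nb nab by (meson linorder_neqE_linordered_idom)
  then show ?thesis
  proof cases
    case 1 show ?thesis by (rule case1[OF D sR a0 b0 z1 z2 z3 1])
  next
    case 2 show ?thesis by (rule case2[OF D sR a0 b0 z1 z2 z3 2])
  next
    case 3 show ?thesis by (rule case3[OF D sR a0 b0 z1 z2 z3 3])
  next
    case 4 show ?thesis by (rule case4[OF D sR a0 b0 z1 z2 z3 4])
  next
    case 5 show ?thesis by (rule case5[OF D sR a0 b0 z1 z2 z3 5])
  next
    case 6 show ?thesis by (rule case6[OF D sR a0 b0 z1 z2 z3 6])
  qed
qed

lemma norm_exp_nonreal: "w \<notin> \<real> \<Longrightarrow> norm (exp (2 * pi * \<i> * w)) \<noteq> 1"
  by (simp add: norm_exp_eq_Re complex_is_Real_iff)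

theorem proposition2p2:
  fixes z w0 w1 :: complex and ws :: "complex list"
  defines "x \<equiv> exp (2 * pi * \<i> * z)"
  defines "q \<equiv> (\<lambda>w::complex. exp (2 * pi * \<i> * w))"
  assumes "w0 \<notin> \<real>" and "w1 \<notin> \<real>" and "\<forall>w\<in>set ws. w \<notin> \<real>" and "w0 + w1 \<notin> \<real>"
  assumes "qpoch x (q w0 # q w1 # map q ws) \<noteq> 0"
      and "qpoch x (q w0 # q w0 * q w1 # map q ws) \<noteq> 0"
      and "qpoch x (inverse (q w1) # q w0 * q w1 # map q ws) \<noteq> 0"
  shows "qpoch x (q w0 # q w1 # map q ws) / qpoch x (q w0 # q w0 * q w1 # map q ws)
         = inverse (qpoch x (inverse (q w1) # q w0 * q w1 # map q ws))"
proof (rule main_alg)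
  show "norm (q w0) \<noteq> 1" unfolding q_def by (rule norm_exp_nonreal) fact
  show "norm (q w1) \<noteq> 1" unfolding q_def by (rule norm_exp_nonreal) fact
  have "q w0 * q w1 = q (w0 + w1)" unfolding q_def by (simp add: distrib_left exp_add)
  thus "norm (q w0 * q w1) \<noteq> 1" unfolding q_def using norm_exp_nonreal[OF assms(6)] by simp
  show "\<forall>r\<in>set (map q ws). norm r \<noteq> 1"
    using assms(5) unfolding q_def by (auto simp: norm_exp_eq_Re complex_is_Real_iff)
  show "q w0 \<noteq> 0" "q w1 \<noteq> 0" unfolding q_def by simp_all
qed (fact assms)+

end
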